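(* Let $G_{\max}=(V,E_{\max})$ be a finite, simple, connected, undirected graph, and let $\lambda',\mu',\gamma'>0$ with $\frac{\lambda'}{\mu'}>1$ and $0<\gamma'\le 1$ (Regime III). For a network state $\mathbf{A}$ (a subset $E(\mathbf{A})\subseteq E_{\max}$ of closed edges) let $g(E(\mathbf{A}))$ be the number of $C_3$ subgraphs (triangles) plus the number of $P_4$ subgraphs (paths with 4 vertices) formed by $E(\mathbf{A})$, and call a maximizer of $\pi(\mathbf{A})\propto(\lambda'/\mu')^{|E(\mathbf{A})|}\gamma'^{\,g(E(\mathbf{A}))}$ over all network states a most-probable network (for POD-DBP). If $\lambda'\gamma'<\mu'$, then the most-probable networks are exactly the network states $\mathbf{A}^*$ with $g(E(\mathbf{A}^* ))=0$ and $|E(\mathbf{A}^* )|$ maximum among such states; equivalently, $E(\mathbf{A}^* )$ is a maximum star matching of $G_{\max}$.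
   Context: A star graph is a graph consisting of a center vertex joined to all other vertices, with no other edges. A star matching of a graph $G=(V,E)$ is a subset of $E$ whose edges form a collection of vertex-disjoint (disconnected) star graphs; a maximum star matching is a star matching with the largest possible number of edges. *)

theory Defs
  imports Complex_Main
begin

definition simple_graph :: "'a set \<Rightarrow> 'a set set \<Rightarrow> bool" where
  "simple_graph V E \<longleftrightarrow> finite V \<and> (\<forall>e\<in>E. e \<subseteq> V \<and> card e = 2)"

definition adj :: "'a set set \<Rightarrow> ('a \<times> 'a) set" where
  "adj E = {(u, v). {u, v} \<in> E}"

definition connected_graph :: "'a set \<Rightarrow> 'a set set \<Rightarrow> bool" where
  "connected_graph V E \<longleftrightarrow> (\<forall>u\<in>V. \<forall>v\<in>V. (u, v) \<in> (adj E)\<^sup>*)"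

definition num_C3 :: "'a set set \<Rightarrow> nat" where
  "num_C3 F = card {{{a, b}, {b, c}, {a, c}} | a b c.
      a \<noteq> b \<and> b \<noteq> c \<and> a \<noteq> c \<and> {a, b} \<in> F \<and> {b, c} \<in> F \<and> {a, c} \<in> F}"

text \<open>Number of P4 subgraphs (paths on 4 vertices) of the graph formed by F,
  each subgraph counted once as its set of three edges.\<close>
definition num_P4 :: "'a set set \<Rightarrow> nat" where
  "num_P4 F = card {{{a, b}, {b, c}, {c, d}} | a b c d.
      distinct [a, b, c, d] \<and> {a, b} \<in> F \<and> {b, c} \<in> F \<and> {c, d} \<in> F}"

definition g_count :: "'a set set \<Rightarrow> nat" where
  "g_count F = num_C3 F + num_P4 F"

definition pod_weight :: "real \<Rightarrow> real \<Rightarrow> real \<Rightarrow> 'a set set \<Rightarrow> real" where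
  "pod_weight lam mu gam F = (lam / mu) ^ card F * gam ^ g_count F"

definition most_probable :: "real \<Rightarrow> real \<Rightarrow> real \<Rightarrow> 'a set set \<Rightarrow> 'a set set \<Rightarrow> bool" where
  "most_probable lam mu gam Emax A \<longleftrightarrow> A \<subseteq> Emax \<and>
     (\<forall>B. B \<subseteq> Emax \<longrightarrow> pod_weight lam mu gam B \<le> pod_weight lam mu gam A)"

definition is_star :: "'a set set \<Rightarrow> bool" where
  "is_star S \<longleftrightarrow> S \<noteq> {} \<and> (\<exists>c. \<forall>e\<in>S. c \<in> e)"

definition star_matching :: "'a set set \<Rightarrow> 'a set set \<Rightarrow> bool" where
  "star_matching E F \<longleftrightarrow> F \<subseteq> E \<and>
     (\<exists>P. \<Union>P = F \<and> (\<forall>S\<in>P. is_star S) \<and>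
          (\<forall>S\<in>P. \<forall>T\<in>P. S \<noteq> T \<longrightarrow> \<Union>S \<inter> \<Union>T = {}))"

definition max_star_matching :: "'a set set \<Rightarrow> 'a set set \<Rightarrow> bool" where
  "max_star_matching E F \<longleftrightarrow> star_matching E F \<and>
     (\<forall>F'. star_matching E F' \<longrightarrow> card F' \<le> card F)"

end

theory Submission
  imports Defs
begin

definition C3s :: "'a set set \<Rightarrow> 'a set set set" where
  "C3s F = {{{a, b}, {b, c}, {a, c}} | a b c.
      a \<noteq> b \<and> b \<noteq> c \<and> a \<noteq> c \<and> {a, b} \<in> F \<and> {b, c} \<in> F \<and> {a, c} \<in> F}"

definition P4s :: "'a set set \<Rightarrow> 'a set set set" where
  "P4s F = {{{a, b}, {b, c}, {c, d}} | a b c d.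
      distinct [a, b, c, d] \<and> {a, b} \<in> F \<and> {b, c} \<in> F \<and> {c, d} \<in> F}"

lemma g_eq: "g_count F = card (C3s F) + card (P4s F)"
  unfolding g_count_def num_C3_def num_P4_def C3s_def P4s_def by simp

lemma C3s_sub: "X \<in> C3s F \<Longrightarrow> X \<subseteq> F"
  unfolding C3s_def by auto
lemma P4s_sub: "X \<in> P4s F \<Longrightarrow> X \<subseteq> F"
  unfolding P4s_def by auto
lemma C3s_mono: "F \<subseteq> G \<Longrightarrow> C3s F \<subseteq> C3s G"
  unfolding C3s_def by blast
lemma P4s_mono: "F \<subseteq> G \<Longrightarrow> P4s F \<subseteq> P4s G"
  unfolding P4s_def by blast
lemma C3s_fin: "finite F \<Longrightarrow> finite (C3s F)"
  by (rule finite_subset[of _ "Pow F"]) (auto dest: C3s_sub)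
lemma P4s_fin: "finite F \<Longrightarrow> finite (P4s F)"
  by (rule finite_subset[of _ "Pow F"]) (auto dest: P4s_sub)
lemma C3s_ne: "X \<in> C3s F \<Longrightarrow> X \<noteq> {}"
  unfolding C3s_def by auto
lemma P4s_ne: "X \<in> P4s F \<Longrightarrow> X \<noteq> {}"
  unfolding P4s_def by auto

lemma g_zero: "finite F \<Longrightarrow> g_count F = 0 \<longleftrightarrow> C3s F = {} \<and> P4s F = {}"
  by (simp add: g_eq C3s_fin P4s_fin)

lemma g_drop:
  assumes "finite B" "g_count B > 0"
  shows "\<exists>e\<in>B. g_count (B - {e}) < g_count B"
proof -
  have fin1: "finite (C3s B)" "finite (P4s B)" using assms(1) by (auto simp: C3s_fin P4s_fin)
  have m1: "card (C3s (B - {e})) \<le> card (C3s B)" for e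
    by (rule card_mono[OF fin1(1) C3s_mono]) auto
  have m2: "card (P4s (B - {e})) \<le> card (P4s B)" for e
    by (rule card_mono[OF fin1(2) P4s_mono]) auto
  from assms(2) have "C3s B \<noteq> {} \<or> P4s B \<noteq> {}" by (auto simp: g_eq)
  then show ?thesis
  proof
    assume "C3s B \<noteq> {}"
    then obtain X where X: "X \<in> C3s B" by auto
    then obtain e where e: "e \<in> X" using C3s_ne by blast
    have eB: "e \<in> B" using C3s_sub[OF X] e by auto
    have "C3s (B - {e}) \<subset> C3s B"
    proof
      show "C3s (B - {e}) \<subseteq> C3s B" by (rule C3s_mono) auto
      have "X \<notin> C3s (B - {e})" using C3s_sub e by blast
      then show "C3s (B - {e}) \<noteq> C3s B" using X by blast
    qed
    then have "card (C3s (B - {e})) < card (C3s B)" using fin1 by (simp add: psubset_card_mono)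
    then show ?thesis using eB m2[of e] by (intro bexI[of _ e]) (auto simp: g_eq)
  next
    assume "P4s B \<noteq> {}"
    then obtain X where X: "X \<in> P4s B" by auto
    then obtain e where e: "e \<in> X" using P4s_ne by blast
    have eB: "e \<in> B" using P4s_sub[OF X] e by auto
    have "P4s (B - {e}) \<subset> P4s B"
    proof
      show "P4s (B - {e}) \<subseteq> P4s B" by (rule P4s_mono) auto
      have "X \<notin> P4s (B - {e})" using P4s_sub e by blast
      then show "P4s (B - {e}) \<noteq> P4s B" using X by blast
    qed
    then have "card (P4s (B - {e})) < card (P4s B)" using fin1 by (simp add: psubset_card_mono)
    then show ?thesis using eB m1[of e] by (intro bexI[of _ e]) (auto simp: g_eq)
  qed
qed

lemma descent:
  fixes r gam :: real
  assumes "finite B" "r > 1" "0 < gam" "gam \<le> 1" "r * gam < 1"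
  shows "\<exists>B'\<subseteq>B. g_count B' = 0 \<and> r ^ card B * gam ^ g_count B \<le> r ^ card B' * gam ^ g_count B'
        \<and> (g_count B > 0 \<longrightarrow> r ^ card B * gam ^ g_count B < r ^ card B' * gam ^ g_count B')"
  using assms(1)
proof (induction "card B" arbitrary: B rule: less_induct)
  case less
  show ?case
  proof (cases "g_count B = 0")
    case True
    then show ?thesis by auto
  next
    case False
    then obtain e where e: "e \<in> B" "g_count (B - {e}) < g_count B"
      using g_drop[OF less.prems] by auto
    define B1 where "B1 = B - {e}"
    have fin: "finite B1" using less.prems by (simp add: B1_def)
    have cB: "card B = Suc (card B1)" using e less.prems unfolding B1_def
      by (metis card_Diff1_less card_Suc_Diff1)
    from less.hyps[of B1] fin cB obtain B' where B': "B' \<subseteq> B1" "g_count B' = 0"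
      "r ^ card B1 * gam ^ g_count B1 \<le> r ^ card B' * gam ^ g_count B'" by auto
    have "gam ^ g_count B \<le> gam ^ Suc (g_count B1)"
      using e(2) assms by (intro power_decreasing) (auto simp: B1_def)
    then have "gam ^ g_count B \<le> gam * gam ^ g_count B1" by simp
    then have "r ^ card B * gam ^ g_count B \<le> r ^ card B * (gam * gam ^ g_count B1)"
      using assms by (intro mult_left_mono) auto
    also have "\<dots> = (r * gam) * (r ^ card B1 * gam ^ g_count B1)" using cB by simp
    also have "\<dots> < r ^ card B1 * gam ^ g_count B1"
    proof -
      have pos: "0 < r ^ card B1 * gam ^ g_count B1" using assms by simp
      show ?thesis using mult_strict_right_mono[OF assms(5) pos] by simp
    qed
    finally have "r ^ card B * gam ^ g_count B < r ^ card B' * gam ^ g_count B'" using B'(3) by simp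
    then show ?thesis using B' unfolding B1_def by (intro exI[of _ B']) auto
  qed
qed

lemma edge2: "card e = 2 \<Longrightarrow> (\<And>x y. e = {x, y} \<Longrightarrow> x \<noteq> y \<Longrightarrow> P) \<Longrightarrow> P"
  by (auto simp: card_2_iff)

lemma edge_other: "card e = 2 \<Longrightarrow> u \<in> e \<Longrightarrow> \<exists>x. e = {x, u} \<and> x \<noteq> u"
  by (auto simp: card_2_iff)

lemma star_imp_free:
  assumes "star_matching E F"
  shows "C3s F = {} \<and> P4s F = {}"
proof -
  from assms obtain P where P: "\<Union>P = F" "\<forall>S\<in>P. is_star S"
    "\<forall>S\<in>P. \<forall>T\<in>P. S \<noteq> T \<longrightarrow> \<Union>S \<inter> \<Union>T = {}"
    unfolding star_matching_def by blast
  have same: "S = T" if "S \<in> P" "T \<in> P" "f \<in> S" "f' \<in> T" "v \<in> f" "v \<in> f'" for S T f f' v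
    using P(3) that by blast
  have inS: "\<exists>S\<in>P. f \<in> S" if "f \<in> F" for f using P(1) that by blast
  have c3: False if "a \<noteq> b" "b \<noteq> c" "a \<noteq> c" "{a, b} \<in> F" "{b, c} \<in> F" "{a, c} \<in> F" for a b c
  proof -
    note T = that
    obtain S1 where S1: "S1 \<in> P" "{a,b} \<in> S1" using inS T by blast
    obtain S2 where S2: "S2 \<in> P" "{b,c} \<in> S2" using inS T by blast
    obtain S3 where S3: "S3 \<in> P" "{a,c} \<in> S3" using inS T by blast
    have "S1 = S2" using same[OF S1(1) S2(1) S1(2) S2(2), of b] by simp
    moreover have "S1 = S3" using same[OF S1(1) S3(1) S1(2) S3(2), of a] by simp
    ultimately obtain x where "x \<in> {a,b}" "x \<in> {b,c}" "x \<in> {a,c}"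
      using P(2) S1 S2 S3 unfolding is_star_def by metis
    then show False using T by auto
  qed
  have p4: False if "distinct [a, b, c, d]" "{a, b} \<in> F" "{b, c} \<in> F" "{c, d} \<in> F" for a b c d
  proof -
    note T = that
    obtain S1 where S1: "S1 \<in> P" "{a,b} \<in> S1" using inS T by blast
    obtain S2 where S2: "S2 \<in> P" "{b,c} \<in> S2" using inS T by blast
    obtain S3 where S3: "S3 \<in> P" "{c,d} \<in> S3" using inS T by blast
    have "S1 = S2" using same[OF S1(1) S2(1) S1(2) S2(2), of b] by simp
    moreover have "S2 = S3" using same[OF S2(1) S3(1) S2(2) S3(2), of c] by simp
    ultimately obtain x where "x \<in> {a,b}" "x \<in> {c,d}"
      using P(2) S1 S2 S3 unfolding is_star_def by metis
    then show False using T by auto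
  qed
  show ?thesis unfolding C3s_def P4s_def using c3 p4 by blast
qed

lemma free_imp_star:
  assumes E2: "\<forall>e\<in>E. card e = 2" and FE: "F \<subseteq> E" and C: "C3s F = {}" and Q: "P4s F = {}"
  shows "star_matching E F"
proof -
  have noC: False if "a \<noteq> b" "b \<noteq> c" "a \<noteq> c" "{a, b} \<in> F" "{b, c} \<in> F" "{a, c} \<in> F" for a b c
  proof -
    have "{{a, b}, {b, c}, {a, c}} \<in> C3s F" unfolding C3s_def using that by blast
    then show False using C by simp
  qed
  have noP: False if "distinct [a, b, c, d]" "{a, b} \<in> F" "{b, c} \<in> F" "{c, d} \<in> F" for a b c d
  proof -
    have "{{a, b}, {b, c}, {c, d}} \<in> P4s F" unfolding P4s_def using that by blast
    then show False using Q by simp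
  qed
  have F2: "card f = 2" if "f \<in> F" for f using E2 FE that by blast
  have tr: "e \<inter> h \<noteq> {}" if "e \<in> F" "f \<in> F" "h \<in> F" "e \<inter> f \<noteq> {}" "f \<inter> h \<noteq> {}" for e f h
  proof
    note T = that
    assume eh: "e \<inter> h = {}"
    obtain u where u: "u \<in> e" "u \<in> f" using T by blast
    obtain w where w: "w \<in> f" "w \<in> h" using T by blast
    have uw: "u \<noteq> w" using u w eh by blast
    have f: "f = {u, w}" using F2[OF T(2)] u w uw by (auto simp: card_2_iff)
    obtain x where e: "e = {x, u}" "x \<noteq> u" using edge_other[OF F2[OF T(1)] u(1)] by blast
    obtain y where h: "h = {w, y}" "y \<noteq> w" using edge_other[OF F2[OF T(3)] w(2)] insert_commute by metis
    have "distinct [x, u, w, y]" using e h eh uw by auto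
    then show False using noP[of x u w y] T e h f by auto
  qed
  define cl where "cl e = {f \<in> F. e \<inter> f \<noteq> {}}" for e
  define P where "P = cl ` F"
  have self: "e \<in> cl e" if "e \<in> F" for e
    using F2[OF that] that unfolding cl_def by (auto simp: card_2_iff)
  have U: "\<Union>P = F"
  proof
    show "\<Union>P \<subseteq> F" unfolding P_def cl_def by blast
    show "F \<subseteq> \<Union>P" unfolding P_def using self by blast
  qed
  have star: "is_star S" if "S \<in> P" for S
  proof -
    note T = that
    obtain e where e: "e \<in> F" "S = cl e" using T P_def by blast
    obtain a b where ab: "e = {a, b}" "a \<noteq> b" using F2[OF e(1)] by (auto simp: card_2_iff)
    have "(\<forall>f\<in>S. a \<in> f) \<or> (\<forall>f\<in>S. b \<in> f)"
    proof (rule ccontr)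
      assume "\<not> ?thesis"
      then obtain f1 f2 where f1: "f1 \<in> S" "a \<notin> f1" and f2: "f2 \<in> S" "b \<notin> f2" by blast
      have f1F: "f1 \<in> F" "b \<in> f1" using f1 e ab unfolding cl_def by auto
      have f2F: "f2 \<in> F" "a \<in> f2" using f2 e ab unfolding cl_def by auto
      obtain y where y: "f1 = {b, y}" "y \<noteq> b" using edge_other[OF F2[OF f1F(1)] f1F(2)] insert_commute by metis
      obtain x where x: "f2 = {x, a}" "x \<noteq> a" using edge_other[OF F2[OF f2F(1)] f2F(2)] by blast
      have ya: "y \<noteq> a" using y f1 by auto
      have xb: "x \<noteq> b" using x f2 by auto
      show False
      proof (cases "x = y")
        case True
        have "{a, x} \<in> F" using f2F(1) x(1) insert_commute by metis
        moreover have "{b, x} \<in> F" using f1F(1) y(1) True by simp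
        moreover have "{a, b} \<in> F" using e ab by simp
        ultimately show ?thesis using noC[of a b x] ab x ya xb True by blast
      next
        case False
        then show ?thesis using noP[of x a b y] ab e f1F f2F x y ya xb by auto
      qed
    qed
    then show ?thesis unfolding is_star_def using self[OF e(1)] e by blast
  qed
  have disj: "\<Union>S \<inter> \<Union>T = {}" if "S \<in> P" "T \<in> P" "S \<noteq> T" for S T
  proof (rule ccontr)
    note T = that
    assume "\<Union>S \<inter> \<Union>T \<noteq> {}"
    then obtain v f1 f2 where v: "v \<in> f1" "f1 \<in> S" "v \<in> f2" "f2 \<in> T" by blast
    obtain e1 where e1: "e1 \<in> F" "S = cl e1" using T P_def by blast
    obtain e2 where e2: "e2 \<in> F" "T = cl e2" using T P_def by blast
    have f1: "f1 \<in> F" "e1 \<inter> f1 \<noteq> {}" using v e1 cl_def by auto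
    have f2: "f2 \<in> F" "e2 \<inter> f2 \<noteq> {}" using v e2 cl_def by auto
    have "f1 \<inter> f2 \<noteq> {}" using v by blast
    then have "e1 \<inter> f2 \<noteq> {}" using tr[OF e1(1) f1(1) f2(1)] f1 by blast
    then have e12: "e1 \<inter> e2 \<noteq> {}" using tr[OF e1(1) f2(1) e2(1)] f2(2) by (simp add: Int_commute)
    have "cl e1 = cl e2"
    proof -
      have "e1 \<inter> g \<noteq> {} \<longleftrightarrow> e2 \<inter> g \<noteq> {}" if "g \<in> F" for g
      proof
        assume "e1 \<inter> g \<noteq> {}"
        then show "e2 \<inter> g \<noteq> {}" using tr[OF e2(1) e1(1) that] e12 by (simp add: Int_commute)
      next
        assume "e2 \<inter> g \<noteq> {}"
        then show "e1 \<inter> g \<noteq> {}" using tr[OF e1(1) e2(1) that] e12 by simp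
      qed
      then show ?thesis unfolding cl_def by blast
    qed
    then show False using T e1 e2 by simp
  qed
  show ?thesis unfolding star_matching_def
    by (rule conjI[OF FE], rule exI[of _ P]) (use U star disj in blast)
qed

theorem theorem8:
  fixes V :: "'a set" and Emax :: "'a set set" and lam mu gam :: real
  assumes "simple_graph V Emax" and "connected_graph V Emax"
    and "lam > 0" and "mu > 0" and "gam > 0"
    and "lam / mu > 1" and "gam \<le> 1"
    and "lam * gam < mu"
    and "A \<subseteq> Emax"
  shows "(most_probable lam mu gam Emax A \<longleftrightarrow>
           (g_count A = 0 \<and> (\<forall>B. B \<subseteq> Emax \<and> g_count B = 0 \<longrightarrow> card B \<le> card A)))
       \<and> (most_probable lam mu gam Emax A \<longleftrightarrow> max_star_matching Emax A)"
proof -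
  define r where "r = lam / mu"
  have r1: "r > 1" using assms r_def by simp
  have rg: "r * gam < 1" using assms unfolding r_def by (simp add: field_simps)
  have finE: "finite Emax" using assms(1) unfolding simple_graph_def
  proof -
    have "Emax \<subseteq> Pow V" "finite V" using assms(1) unfolding simple_graph_def by auto
    then show ?thesis by (meson finite_Pow_iff finite_subset)
  qed
  have E2: "\<forall>e\<in>Emax. card e = 2" using assms(1) unfolding simple_graph_def by blast
  have fin: "finite B" if "B \<subseteq> Emax" for B using finE that finite_subset by blast
  have w: "pod_weight lam mu gam B = r ^ card B * gam ^ g_count B" for B
    unfolding pod_weight_def r_def by simp
  have desc: "\<exists>B'\<subseteq>B. g_count B' = 0 \<and> r ^ card B * gam ^ g_count B \<le> r ^ card B' * gam ^ g_count B'
        \<and> (g_count B > 0 \<longrightarrow> r ^ card B * gam ^ g_count B < r ^ card B' * gam ^ g_count B')"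
    if "B \<subseteq> Emax" for B
    using descent[OF fin[OF that] r1 assms(5,7) rg] .
  have P1: "most_probable lam mu gam Emax A \<longleftrightarrow>
           (g_count A = 0 \<and> (\<forall>B. B \<subseteq> Emax \<and> g_count B = 0 \<longrightarrow> card B \<le> card A))"
  proof
    assume mp: "most_probable lam mu gam Emax A"
    have g0: "g_count A = 0"
    proof (rule ccontr)
      assume "g_count A \<noteq> 0"
      then obtain B' where B': "B' \<subseteq> A" "r ^ card A * gam ^ g_count A < r ^ card B' * gam ^ g_count B'"
        using desc[OF assms(9)] by auto
      have "B' \<subseteq> Emax" using B'(1) assms(9) by blast
      then have "pod_weight lam mu gam B' \<le> pod_weight lam mu gam A" using mp unfolding most_probable_def by blast
      then show False using B'(2) unfolding w by linarith
    qed
    moreover have "card B \<le> card A" if "B \<subseteq> Emax" "g_count B = 0" for B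
    proof -
      have "pod_weight lam mu gam B \<le> pod_weight lam mu gam A" using mp that unfolding most_probable_def by blast
      then have "r ^ card B \<le> r ^ card A" using that g0 unfolding w by simp
      then show ?thesis using r1 by (simp add: power_le_imp_le_exp)
    qed
    ultimately show "g_count A = 0 \<and> (\<forall>B. B \<subseteq> Emax \<and> g_count B = 0 \<longrightarrow> card B \<le> card A)" by blast
  next
    assume H: "g_count A = 0 \<and> (\<forall>B. B \<subseteq> Emax \<and> g_count B = 0 \<longrightarrow> card B \<le> card A)"
    have "pod_weight lam mu gam B \<le> pod_weight lam mu gam A" if "B \<subseteq> Emax" for B
    proof -
      note BE = that
      obtain B' where B': "B' \<subseteq> B" "g_count B' = 0" "r ^ card B * gam ^ g_count B \<le> r ^ card B' * gam ^ g_count B'"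
        using desc[OF BE] by blast
      have "B' \<subseteq> Emax" using B'(1) BE by blast
      then have "card B' \<le> card A" using H B'(2) by blast
      then have "r ^ card B' \<le> r ^ card A" using r1 by (simp add: power_increasing)
      then show ?thesis using B' H unfolding w by simp
    qed
    then show "most_probable lam mu gam Emax A" unfolding most_probable_def using assms(9) by blast
  qed
  have SM: "star_matching Emax B \<longleftrightarrow> B \<subseteq> Emax \<and> g_count B = 0" for B
  proof
    assume s: "star_matching Emax B"
    then have "B \<subseteq> Emax" unfolding star_matching_def by blast
    then show "B \<subseteq> Emax \<and> g_count B = 0" using star_imp_free[OF s] g_zero fin by blast
  next
    assume "B \<subseteq> Emax \<and> g_count B = 0"
    then show "star_matching Emax B" using free_imp_star[OF E2] g_zero fin by blast
  qed
  have "max_star_matching Emax A \<longleftrightarrow>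
           (g_count A = 0 \<and> (\<forall>B. B \<subseteq> Emax \<and> g_count B = 0 \<longrightarrow> card B \<le> card A))"
    unfolding max_star_matching_def SM using assms(9) by blast
  then show ?thesis using P1 by blast
qed

end
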